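(* Let $F$ be a graph of diameter $2$, $n=|V(F)|$, $t=\delta(F)$, and let $l>n$ be an integer. Then $f_{2l}\le n!\,C_{l-1}^{n-t-1}$.
   Context: All graphs are simple, finite, undirected. The $F$-degree of a vertex $v$ in $G$ is the number of subgraphs of $G$ (not necessarily induced) isomorphic to $F$ and containing $v$. $A_{2l-1}$ is the graph with vertex set $\{1,\dots,2l-1\}$ in which distinct $i,j$ are adjacent iff $|i-j|\le l-1$; $F_{2l}$ is obtained from $A_{2l-1}$ by adding a new vertex $2l$ joined exactly to $1,\dots,t$. $f_{2l}$ is the $F$-degree of vertex $2l$ in $F_{2l}$. $C_m^k=\frac{m!}{k!(m-k)!}$ for integers $m\ge k\ge 0$, and $C_m^k=0$ otherwise. *)

theory Defs
  imports Main "HOL-Library.Extended_Nat"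
begin

definition simple_graph :: "'a set \<Rightarrow> 'a set set \<Rightarrow> bool" where
  "simple_graph V E \<longleftrightarrow> finite V \<and> (\<forall>e\<in>E. e \<subseteq> V \<and> card e = 2)"

definition degree :: "'a set \<Rightarrow> 'a set set \<Rightarrow> 'a \<Rightarrow> nat" where
  "degree V E v = card {u \<in> V. {u, v} \<in> E}"

definition min_degree :: "'a set \<Rightarrow> 'a set set \<Rightarrow> nat" where
  "min_degree V E = Min (degree V E ` V)"

definition is_walk :: "'a set \<Rightarrow> 'a set set \<Rightarrow> 'a list \<Rightarrow> bool" where
  "is_walk V E xs \<longleftrightarrow> xs \<noteq> [] \<and> set xs \<subseteq> V \<and>
     (\<forall>i. Suc i < length xs \<longrightarrow> {xs ! i, xs ! Suc i} \<in> E)"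

definition gdist :: "'a set \<Rightarrow> 'a set set \<Rightarrow> 'a \<Rightarrow> 'a \<Rightarrow> enat" where
  "gdist V E x y = Inf {enat (length xs - 1) | xs. is_walk V E xs \<and> hd xs = x \<and> last xs = y}"

definition diameter :: "'a set \<Rightarrow> 'a set set \<Rightarrow> enat" where
  "diameter V E = Sup {gdist V E x y | x y. x \<in> V \<and> y \<in> V}"

definition graph_iso :: "'a set \<Rightarrow> 'a set set \<Rightarrow> 'b set \<Rightarrow> 'b set set \<Rightarrow> bool" where
  "graph_iso V1 E1 V2 E2 \<longleftrightarrow> (\<exists>f. bij_betw f V1 V2 \<and>
     (\<forall>x\<in>V1. \<forall>y\<in>V1. {x, y} \<in> E1 \<longleftrightarrow> {f x, f y} \<in> E2))"

text \<open>F-degree of v in G: number of (not necessarily induced) subgraphs (W,D) of G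
  isomorphic to F with v \<in> W.\<close>
definition F_degree :: "'b set \<Rightarrow> 'b set set \<Rightarrow> 'a set \<Rightarrow> 'a set set \<Rightarrow> 'a \<Rightarrow> nat" where
  "F_degree VF EF V E v = card {(W, D). W \<subseteq> V \<and> D \<subseteq> E \<and> (\<forall>e\<in>D. e \<subseteq> W) \<and> v \<in> W
      \<and> graph_iso W D VF EF}"

definition A_V :: "nat \<Rightarrow> nat set" where
  "A_V l = {1..2*l-1}"

definition A_E :: "nat \<Rightarrow> nat set set" where
  "A_E l = {{i, j} | i j. i \<in> A_V l \<and> j \<in> A_V l \<and> i \<noteq> j \<and>
                          \<bar>int i - int j\<bar> \<le> int l - 1}"

definition FF_V :: "nat \<Rightarrow> nat set" where
  "FF_V l = {1..2*l}"

definition FF_E :: "nat \<Rightarrow> nat \<Rightarrow> nat set set" where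
  "FF_E l t = A_E l \<union> {{2*l, i} | i. 1 \<le> i \<and> i \<le> t}"

end

theory Submission
  imports Defs "HOL-Combinatorics.Permutations"
begin

lemma gdist_le2:
  assumes "gdist V E a b \<le> 2"
  shows "\<exists>xs. is_walk V E xs \<and> hd xs = a \<and> last xs = b \<and> length xs \<le> 3"
proof -
  let ?A = "{enat (length xs - 1) | xs. is_walk V E xs \<and> hd xs = a \<and> last xs = b}"
  have ne: "?A \<noteq> {}"
  proof
    assume "?A = {}"
    hence "gdist V E a b = \<infinity>" unfolding gdist_def by (simp add: Inf_enat_def)
    with assms show False by simp
  qed
  hence "Inf ?A \<in> ?A" unfolding Inf_enat_def by (auto intro: LeastI)
  then obtain xs where xs: "is_walk V E xs" "hd xs = a" "last xs = b"
    "Inf ?A = enat (length xs - 1)" by blast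
  have "enat (length xs - 1) \<le> 2" using assms xs(4) unfolding gdist_def by simp
  hence "length xs - 1 \<le> 2" by (simp add: numeral_eq_enat)
  hence "length xs \<le> 3" using xs(1) unfolding is_walk_def by (cases xs) auto
  with xs show ?thesis by blast
qed

lemma walk_short:
  assumes "is_walk V E xs" "length xs \<le> 3" "hd xs = a" "last xs = b" "a \<noteq> b"
  shows "{a,b} \<in> E \<or> (\<exists>m\<in>V. {a,m} \<in> E \<and> {m,b} \<in> E)"
proof -
  have ne: "xs \<noteq> []" and sub: "set xs \<subseteq> V"
    and ed: "\<And>i. Suc i < length xs \<Longrightarrow> {xs ! i, xs ! Suc i} \<in> E"
    using assms(1) unfolding is_walk_def by auto
  have h: "xs ! 0 = a" using assms(3) ne by (simp add: hd_conv_nth)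
  have l: "xs ! (length xs - 1) = b" using assms(4) ne by (simp add: last_conv_nth)
  have "length xs \<noteq> 0" using ne by simp
  then consider "length xs = 1" | "length xs = 2" | "length xs = 3" using assms(2)
    by linarith
  then show ?thesis
  proof cases
    case 1 then show ?thesis using h l assms(5) by simp
  next
    case 2 then show ?thesis using h l ed[of 0] by simp
  next
    case 3
    have "xs ! 1 \<in> V" using sub 3 by (simp add: subset_iff)
    then show ?thesis using h l ed[of 0] ed[of 1] 3 by (auto simp: numeral_2_eq_2)
  qed
qed

lemma FF_E_cases:
  assumes "e \<in> FF_E l t"
  shows "(\<exists>i j. e = {i,j} \<and> i \<in> {1..2*l-1} \<and> j \<in> {1..2*l-1} \<and> i \<noteq> j \<and> \<bar>int i - int j\<bar> \<le> int l - 1)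
    \<or> (\<exists>i. e = {2*l, i} \<and> 1 \<le> i \<and> i \<le> t)"
  using assms unfolding FF_E_def A_E_def A_V_def by blast

lemma copy_shape:
  assumes sg: "simple_graph VF EF" and diam: "diameter VF EF = 2"
    and tdef: "t = min_degree VF EF" and tl: "t < l"
    and W: "W \<subseteq> FF_V l" and D: "D \<subseteq> FF_E l t" and DW: "\<forall>e\<in>D. e \<subseteq> W"
    and vW: "2*l \<in> W" and bij: "bij_betw f W VF"
    and iso: "\<forall>x\<in>W. \<forall>y\<in>W. {x, y} \<in> D \<longleftrightarrow> {f x, f y} \<in> EF"
  shows "{1..t} \<subseteq> W" "W - {1..t} - {2*l} \<subseteq> {t+1..t+l-1}"
proof -
  have finV: "finite VF" using sg unfolding simple_graph_def by auto
  have finW: "finite W" using W unfolding FF_V_def using finite_subset by blast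
  define N where "N = {x\<in>W. {x,2*l} \<in> D}"
  have Nsub: "N \<subseteq> {1..t}"
  proof
    fix x assume "x \<in> N"
    hence xW: "x \<in> W" and xD: "{x,2*l} \<in> FF_E l t" using D unfolding N_def by auto
    from FF_E_cases[OF xD] show "x \<in> {1..t}"
    proof
      assume "\<exists>i j. {x, 2 * l} = {i, j} \<and> i \<in> {1..2 * l - 1} \<and> j \<in> {1..2 * l - 1} \<and> i \<noteq> j \<and> \<bar>int i - int j\<bar> \<le> int l - 1"
      then obtain i j where "{x, 2 * l} = {i, j}" "i \<in> {1..2 * l - 1}" "j \<in> {1..2 * l - 1}" by blast
      hence False by (auto simp: doubleton_eq_iff)
      thus ?thesis ..
    next
      assume "\<exists>i. {x, 2 * l} = {2 * l, i} \<and> 1 \<le> i \<and> i \<le> t"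
      then obtain i where "{x, 2 * l} = {2 * l, i}" "1 \<le> i" "i \<le> t" by blast
      thus ?thesis using tl by (auto simp: doubleton_eq_iff)
    qed
  qed
  have fv: "f (2*l) \<in> VF" using bij vW bij_betwE by blast
  have img: "f ` N = {u\<in>VF. {u, f (2*l)} \<in> EF}"
  proof
    show "f ` N \<subseteq> {u\<in>VF. {u, f (2*l)} \<in> EF}"
      using iso vW bij bij_betwE unfolding N_def by fastforce
  next
    show "{u\<in>VF. {u, f (2*l)} \<in> EF} \<subseteq> f ` N"
    proof
      fix u assume u: "u \<in> {u\<in>VF. {u, f (2*l)} \<in> EF}"
      define x where "x = inv_into W f u"
      have xW: "x \<in> W" and fx: "f x = u" using u bij unfolding x_def
        by (auto simp: bij_betw_def inv_into_into f_inv_into_f)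
      have "x \<in> N" using iso xW vW fx u unfolding N_def by auto
      thus "u \<in> f ` N" using fx by blast
    qed
  qed
  have "t \<le> degree VF EF (f (2*l))" unfolding tdef min_degree_def
    using finV fv by (auto intro: Min_le)
  also have "\<dots> = card (f ` N)" unfolding degree_def img ..
  also have "\<dots> \<le> card N" using finW unfolding N_def by (auto intro: card_image_le)
  finally have "card {1..t} \<le> card N" by simp
  hence Neq: "N = {1..t}" using Nsub by (intro card_seteq) auto
  thus "{1..t} \<subseteq> W" unfolding N_def by auto
  show "W - {1..t} - {2*l} \<subseteq> {t+1..t+l-1}"
  proof
    fix w assume w: "w \<in> W - {1..t} - {2*l}"
    have wW: "w \<in> W" and wt: "w \<notin> {1..t}" and wl: "w \<noteq> 2*l" using w by auto
    have w1: "1 \<le> w" using W wW unfolding FF_V_def by auto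
    have fw: "f w \<in> VF" using bij wW bij_betwE by blast
    have "gdist VF EF (f w) (f (2*l)) \<le> diameter VF EF"
      unfolding diameter_def using fw fv by (intro Sup_upper) blast
    hence "gdist VF EF (f w) (f (2*l)) \<le> 2" using diam by simp
    from gdist_le2[OF this] obtain xs where xs: "is_walk VF EF xs" "hd xs = f w" "last xs = f (2*l)" "length xs \<le> 3"
      by blast
    have ne: "f w \<noteq> f (2*l)" using bij wW vW wl unfolding bij_betw_def inj_on_def by blast
    from walk_short[OF xs(1,4,2,3) ne]
    show "w \<in> {t+1..t+l-1}"
    proof
      assume "{f w, f (2 * l)} \<in> EF"
      hence "w \<in> N" using iso wW vW unfolding N_def by auto
      with Neq wt show ?thesis by simp
    next
      assume "\<exists>m\<in>VF. {f w, m} \<in> EF \<and> {m, f (2 * l)} \<in> EF"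
      then obtain m where m: "m \<in> VF" "{f w, m} \<in> EF" "{m, f (2 * l)} \<in> EF" by blast
      define x where "x = inv_into W f m"
      have xW: "x \<in> W" and fx: "f x = m" using m bij unfolding x_def
        by (auto simp: bij_betw_def inv_into_into f_inv_into_f)
      have "x \<in> N" using iso xW vW fx m unfolding N_def by auto
      hence xt: "x \<in> {1..t}" using Neq by simp
      have wx: "{w, x} \<in> FF_E l t" using iso xW wW fx m D by auto
      from FF_E_cases[OF wx] show ?thesis
      proof
        assume "\<exists>i j. {w, x} = {i, j} \<and> i \<in> {1..2 * l - 1} \<and> j \<in> {1..2 * l - 1} \<and> i \<noteq> j \<and> \<bar>int i - int j\<bar> \<le> int l - 1"
        then obtain i j where "{w, x} = {i, j}" "\<bar>int i - int j\<bar> \<le> int l - 1" by blast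
        hence "\<bar>int w - int x\<bar> \<le> int l - 1" by (auto simp: doubleton_eq_iff abs_minus_commute)
        thus ?thesis using xt wt w1 by auto
      next
        assume "\<exists>i. {w, x} = {2 * l, i} \<and> 1 \<le> i \<and> i \<le> t"
        then obtain i where "{w, x} = {2 * l, i}" by blast
        thus ?thesis using wl xt tl by (auto simp: doubleton_eq_iff)
      qed
    qed
  qed
qed

theorem lemma6:
  fixes VF :: "'b set" and EF :: "'b set set" and n t l :: nat
  assumes "simple_graph VF EF"
    and "diameter VF EF = 2"
    and "n = card VF"
    and "t = min_degree VF EF"
    and "l > n"
  shows "F_degree VF EF (FF_V l) (FF_E l t) (2*l) \<le> fact n * ((l - 1) choose (n - t - 1))"
proof -
  note sg = assms(1) and diam = assms(2) and ndef = assms(3) and tdef = assms(4)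
  have finV: "finite VF" using sg unfolding simple_graph_def by auto
  have VFne: "VF \<noteq> {}"
  proof
    assume "VF = {}"
    hence "diameter VF EF = 0" unfolding diameter_def by (simp add: bot_enat_def)
    with diam show False by simp
  qed
  then obtain v where v: "v \<in> VF" by blast
  have "t \<le> degree VF EF v" unfolding tdef min_degree_def using finV v by (auto intro: Min_le)
  also have "\<dots> \<le> card VF" unfolding degree_def using finV by (intro card_mono) auto
  finally have tn: "t \<le> n" using ndef by simp
  hence tl: "t < l" using assms(5) by simp
  define S where "S = {(W, D). W \<subseteq> FF_V l \<and> D \<subseteq> FF_E l t \<and> (\<forall>e\<in>D. e \<subseteq> W) \<and> 2*l \<in> W
      \<and> graph_iso W D VF EF}"
  define Xs where "Xs = {X. X \<subseteq> {t+1..t+l-1} \<and> card X = n-t-1}"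
  define G where "G = (\<lambda>X. {1..t} \<union> {2*l} \<union> X) ` Xs"
  define hW where "hW = (\<lambda>W::nat set. SOME h::nat\<Rightarrow>'b. bij_betw h W VF)"
  define Dof where "Dof = (\<lambda>(W::nat set) (g::nat\<Rightarrow>'b). {{x,y}| x y. x\<in>W \<and> y\<in>W \<and> {g x, g y} \<in> EF})"
  define Ds where "Ds = (\<lambda>W. (\<lambda>p. Dof W (\<lambda>x. p (hW W x))) ` {p. p permutes VF})"
  have finXs: "finite Xs" unfolding Xs_def by auto
  have cardXs: "card Xs = (l - 1) choose (n - t - 1)" unfolding Xs_def
    by (subst n_subsets) auto
  have finG: "finite G" unfolding G_def using finXs by simp
  have cardG: "card G \<le> (l - 1) choose (n - t - 1)" unfolding G_def using cardXs card_image_le finXs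
    by metis
  have finP: "finite {p. p permutes VF}" using finV by (rule finite_permutations)
  have cardP: "card {p. p permutes VF} = fact n" using card_permutations[OF ndef[symmetric] finV] .
  have finDs: "\<forall>W\<in>G. finite (Ds W)" unfolding Ds_def using finP by auto
  have cardDs: "\<And>W. card (Ds W) \<le> fact n" unfolding Ds_def using finP cardP card_image_le by metis
  have sub: "S \<subseteq> Sigma G Ds"
  proof
    fix WD assume "WD \<in> S"
    then obtain W D where WD: "WD = (W, D)" and W: "W \<subseteq> FF_V l" and D: "D \<subseteq> FF_E l t"
      and DW: "\<forall>e\<in>D. e \<subseteq> W" and vW: "2*l \<in> W" and gi: "graph_iso W D VF EF"
      unfolding S_def by blast
    from gi obtain f where bij: "bij_betw f W VF"
      and iso: "\<forall>x\<in>W. \<forall>y\<in>W. {x, y} \<in> D \<longleftrightarrow> {f x, f y} \<in> EF"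
      unfolding graph_iso_def by blast
    note sh = copy_shape[OF sg diam tdef tl W D DW vW bij iso]
    have finW: "finite W" using W unfolding FF_V_def using finite_subset by blast
    define X where "X = W - ({1..t} \<union> {2*l})"
    have Weq: "W = {1..t} \<union> {2*l} \<union> X" unfolding X_def using sh(1) vW by auto
    have cW: "card W = n" using bij_betw_same_card[OF bij] ndef by simp
    have c2: "card ({1..t} \<union> {2*l}) = t + 1" using tl by simp
    have "card X = n - t - 1" unfolding X_def using card_Diff_subset[of "{1..t} \<union> {2*l}" W] sh(1) vW finW cW c2
      by (simp add: finite_subset)
    moreover have "X \<subseteq> {t+1..t+l-1}" using sh(2) unfolding X_def by auto
    ultimately have WG: "W \<in> G" unfolding G_def Xs_def using Weq by blast
    have hb: "bij_betw (hW W) W VF" unfolding hW_def using bij by (rule someI[where P="\<lambda>h. bij_betw h W VF"])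
    define p where "p = (\<lambda>a. if a \<in> VF then f (inv_into W (hW W) a) else a)"
    have "bij_betw (f \<circ> inv_into W (hW W)) VF VF"
      using bij_betw_trans[OF bij_betw_inv_into[OF hb] bij] .
    hence "bij_betw p VF VF" unfolding p_def by (rule bij_betw_cong[THEN iffD1, rotated]) simp
    hence pp: "p permutes VF" by (rule bij_imp_permutes) (simp add: p_def)
    have pf: "\<And>x. x \<in> W \<Longrightarrow> p (hW W x) = f x"
      using hb unfolding p_def bij_betw_def by (auto simp: inv_into_f_f)
    have "D = Dof W f"
    proof
      show "D \<subseteq> Dof W f"
      proof
        fix e assume e: "e \<in> D"
        hence "e \<in> FF_E l t" using D by auto
        then obtain x y where "e = {x,y}" using FF_E_cases by blast
        moreover have "x \<in> W" "y \<in> W" using e DW \<open>e = {x,y}\<close> by auto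
        ultimately show "e \<in> Dof W f" unfolding Dof_def using e iso by blast
      qed
    next
      show "Dof W f \<subseteq> D" unfolding Dof_def using iso by auto
    qed
    also have "\<dots> = Dof W (\<lambda>x. p (hW W x))" unfolding Dof_def
      by (intro Collect_cong ex_cong1 conj_cong refl) (simp_all add: pf)
    finally have "D \<in> Ds W" unfolding Ds_def using pp by blast
    with WG show "WD \<in> Sigma G Ds" using WD by blast
  qed
  have "F_degree VF EF (FF_V l) (FF_E l t) (2*l) = card S" unfolding F_degree_def S_def ..
  also have "\<dots> \<le> card (Sigma G Ds)" using sub finG finDs by (intro card_mono) auto
  also have "\<dots> = (\<Sum>W\<in>G. card (Ds W))" using finG finDs by simp
  also have "\<dots> \<le> (\<Sum>W\<in>G. fact n)" using cardDs by (intro sum_mono) auto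
  also have "\<dots> = card G * fact n" by simp
  also have "\<dots> \<le> ((l - 1) choose (n - t - 1)) * fact n" using cardG by simp
  finally show ?thesis by (simp add: mult.commute)
qed

end
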